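(* Let $R$ be a $*$-ring. Then $R$ is strongly $J$-$*$-clean if and only if $R/J(R)$ is Boolean and $R$ is strongly $*$-clean.
   Context: All rings are associative with identity. A $*$-ring is a ring $R$ with an involution $*$, i.e. a map $a\mapsto a^*$ with $(a+b)^*=a^*+b^*$, $(ab)^*=b^*a^*$, $(a^* )^*=a$. $U(R)$ denotes the group of units and $J(R)$ the Jacobson radical of $R$. A projection is an element $e$ with $e^2=e=e^*$. $R$ is strongly $J$-$*$-clean if every $a\in R$ can be written $a=e+u$ with $e$ a projection, $u\in J(R)$ and $ae=ea$. $R$ is strongly $*$-clean if every $a\in R$ can be written $a=e+u$ with $e$ a projection, $u\in U(R)$ and $eu=ue$. A ring is Boolean if every element is idempotent. *)

theory Defs
  imports Main
begin

definition involution :: "('a::ring_1 \<Rightarrow> 'a) \<Rightarrow> bool" where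
  "involution s \<longleftrightarrow> (\<forall>a b. s (a + b) = s a + s b) \<and> (\<forall>a b. s (a * b) = s b * s a)
                      \<and> (\<forall>a. s (s a) = a)"

definition is_projection :: "('a::ring_1 \<Rightarrow> 'a) \<Rightarrow> 'a \<Rightarrow> bool" where
  "is_projection s e \<longleftrightarrow> e * e = e \<and> s e = e"

definition units_of_ring :: "'a::ring_1 set" where
  "units_of_ring = {u. \<exists>v. u * v = 1 \<and> v * u = 1}"

definition left_ideal :: "'a::ring_1 set \<Rightarrow> bool" where
  "left_ideal I \<longleftrightarrow> 0 \<in> I \<and> (\<forall>x\<in>I. \<forall>y\<in>I. x - y \<in> I) \<and> (\<forall>r. \<forall>x\<in>I. r * x \<in> I)"

definition maximal_left_ideal :: "'a::ring_1 set \<Rightarrow> bool" where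
  "maximal_left_ideal I \<longleftrightarrow> left_ideal I \<and> I \<noteq> UNIV \<and>
     (\<forall>K. left_ideal K \<and> I \<subseteq> K \<and> K \<noteq> UNIV \<longrightarrow> K = I)"

definition jacobson :: "'a::ring_1 set" where
  "jacobson = \<Inter> {I. maximal_left_ideal I}"

definition strongly_J_star_clean :: "('a::ring_1 \<Rightarrow> 'a) \<Rightarrow> bool" where
  "strongly_J_star_clean s \<longleftrightarrow>
     (\<forall>a. \<exists>e u. a = e + u \<and> is_projection s e \<and> u \<in> jacobson \<and> a * e = e * a)"

definition strongly_star_clean :: "('a::ring_1 \<Rightarrow> 'a) \<Rightarrow> bool" where
  "strongly_star_clean s \<longleftrightarrow>
     (\<forall>a. \<exists>e u. a = e + u \<and> is_projection s e \<and> u \<in> units_of_ring \<and> e * u = u * e)"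

text \<open>R/J(R) is Boolean: every coset a + J(R) is idempotent, i.e. a*a - a \<in> J(R).\<close>
definition quotient_by_jacobson_boolean :: "'a::ring_1 itself \<Rightarrow> bool" where
  "quotient_by_jacobson_boolean _ \<longleftrightarrow> (\<forall>a::'a. a * a - a \<in> jacobson)"

end

theory Submission
  imports Defs
begin

lemma J_li: "left_ideal (jacobson::'a::ring_1 set)"
  unfolding left_ideal_def jacobson_def maximal_left_ideal_def by auto

lemma J_zero: "0 \<in> (jacobson::'a::ring_1 set)"
  using J_li unfolding left_ideal_def by blast
lemma J_diff: "x \<in> jacobson \<Longrightarrow> y \<in> jacobson \<Longrightarrow> (x::'a::ring_1) - y \<in> jacobson"
  using J_li unfolding left_ideal_def by blast
lemma J_mult: "x \<in> jacobson \<Longrightarrow> (r::'a::ring_1) * x \<in> jacobson"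
  using J_li unfolding left_ideal_def by blast
lemma J_uminus: "x \<in> jacobson \<Longrightarrow> - (x::'a::ring_1) \<in> jacobson"
  using J_diff[OF J_zero, of x] by simp
lemma J_add: "x \<in> jacobson \<Longrightarrow> y \<in> jacobson \<Longrightarrow> (x::'a::ring_1) + y \<in> jacobson"
  using J_diff[of x "-y"] J_uminus[of y] by simp

lemma li_one: "left_ideal K \<Longrightarrow> (1::'a::ring_1) \<in> K \<Longrightarrow> K = UNIV"
  unfolding left_ideal_def by (metis UNIV_eq_I mult.right_neutral)

lemma J_left_inv:
  fixes x :: "'a::ring_1"
  assumes x: "x \<in> jacobson"
  shows "\<exists>y. y * (1 + x) = 1"
proof (rule ccontr)
  assume nl: "\<not> (\<exists>y. y * (1 + x) = 1)"
  define S where "S = {K::'a set. left_ideal K \<and> (\<forall>r. r*(1+x) \<in> K) \<and> 1 \<notin> K}"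
  define L where "L = {r*(1+x) | r. True}"
  have LS: "L \<in> S"
  proof -
    have z: "0 \<in> L" unfolding L_def by (auto intro!: exI[of _ 0])
    have d: "a - b \<in> L" if ab: "a \<in> L" "b \<in> L" for a b
    proof -
      obtain p where p: "a = p*(1+x)" using ab(1) unfolding L_def by blast
      obtain q where q: "b = q*(1+x)" using ab(2) unfolding L_def by blast
      from p q have "a = p*(1+x)" "b = q*(1+x)" by auto
      then have "a - b = (p - q) * (1+x)" by (simp add: left_diff_distrib)
      then show ?thesis unfolding L_def by blast
    qed
    have m: "r * a \<in> L" if aL: "a \<in> L" for r a
    proof -
      obtain p where "a = p*(1+x)" using aL unfolding L_def by auto
      then have "r * a = (r * p) * (1+x)" by (simp add: mult.assoc)
      then show ?thesis unfolding L_def by blast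
    qed
    have o: "1 \<notin> L" using nl unfolding L_def by auto
    have a: "\<forall>r. r*(1+x) \<in> L" unfolding L_def by blast
    show ?thesis unfolding S_def left_ideal_def using z d m o a by blast
  qed
  have "\<exists>M\<in>S. \<forall>X\<in>S. M \<subseteq> X \<longrightarrow> X = M"
  proof (rule subset_Zorn)
    fix C assume ch: "subset.chain S C"
    show "\<exists>U\<in>S. \<forall>X\<in>C. X \<subseteq> U"
    proof (cases "C = {}")
      case True then show ?thesis using LS by auto
    next
      case False
      have CS: "C \<subseteq> S" and tot: "\<forall>X\<in>C. \<forall>Y\<in>C. X \<subseteq> Y \<or> Y \<subseteq> X"
        using ch unfolding subset_chain_def by auto
      have "\<Union>C \<in> S"
        unfolding S_def left_ideal_def
      proof (intro CollectI conjI ballI allI)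
        show "0 \<in> \<Union>C" using False CS unfolding S_def left_ideal_def by auto
        show "1 \<notin> \<Union>C" using CS unfolding S_def by auto
      next
        fix r show "r * (1+x) \<in> \<Union>C" using False CS unfolding S_def by auto
      next
        fix a b assume a: "a \<in> \<Union>C" and b: "b \<in> \<Union>C"
        then obtain A B where A: "A \<in> C" "a \<in> A" and B: "B \<in> C" "b \<in> B" by auto
        show "a - b \<in> \<Union>C"
        proof (cases "A \<subseteq> B")
          case True
          then have "a - b \<in> B" using A B CS unfolding S_def left_ideal_def by blast
          then show ?thesis using B by auto
        next
          case False
          then have "B \<subseteq> A" using tot A B by blast
          then have "a - b \<in> A" using A B CS unfolding S_def left_ideal_def by blast
          then show ?thesis using A by auto
        qed
      next
        fix r a assume "a \<in> \<Union>C"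
        then obtain A where A: "A \<in> C" "a \<in> A" by auto
        then have "r * a \<in> A" using CS unfolding S_def left_ideal_def by blast
        then show "r * a \<in> \<Union>C" using A by auto
      qed
      then show ?thesis by auto
    qed
  qed
  then obtain M where MS: "M \<in> S" and Mmax: "\<forall>X\<in>S. M \<subseteq> X \<longrightarrow> X = M" by blast
  have "maximal_left_ideal M"
    unfolding maximal_left_ideal_def
  proof (intro conjI allI impI)
    show "left_ideal M" using MS unfolding S_def by auto
    show "M \<noteq> UNIV" using MS unfolding S_def by auto
  next
    fix K assume K: "left_ideal K \<and> M \<subseteq> K \<and> K \<noteq> UNIV"
    then have "1 \<notin> K" using li_one by blast
    moreover have "\<forall>r. r*(1+x) \<in> K" using K MS unfolding S_def by auto
    ultimately have "K \<in> S" using K unfolding S_def by auto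
    then show "K = M" using Mmax K by auto
  qed
  then have "x \<in> M" using x unfolding jacobson_def by auto
  moreover have "1 + x \<in> M" using MS unfolding S_def by (metis (mono_tags) mem_Collect_eq mult_1)
  ultimately have "(1 + x) - x \<in> M" using MS unfolding S_def left_ideal_def by blast
  then show False using MS unfolding S_def by auto
qed

lemma J_unit:
  fixes x :: "'a::ring_1"
  assumes x: "x \<in> jacobson"
  shows "1 + x \<in> units_of_ring"
proof -
  obtain y where y: "y * (1 + x) = 1" using J_left_inv[OF x] by blast
  have yx: "- (y * x) \<in> jacobson" using J_uminus[OF J_mult[OF x]] .
  have yeq: "y = 1 + - (y * x)" using y by (simp add: algebra_simps)
  obtain z where z: "z * (1 + - (y*x)) = 1" using J_left_inv[OF yx] by blast
  then have zy: "z * y = 1" using yeq by simp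
  have "z = z * y * (1 + x)" using y by (simp add: mult.assoc)
  then have "z = 1 + x" using zy by simp
  then have "(1 + x) * y = 1" using zy by simp
  then show ?thesis using y unfolding units_of_ring_def by blast
qed

lemma unit_mult: "u \<in> units_of_ring \<Longrightarrow> v \<in> units_of_ring \<Longrightarrow> (u::'a::ring_1) * v \<in> units_of_ring"
  unfolding units_of_ring_def
proof (clarify)
  fix u' v' assume a: "u * u' = 1" "u' * u = 1" "v * v' = 1" "v' * v = 1"
  have "u * v * (v' * u') = 1" using a by (metis mult.assoc mult_1)
  moreover have "v' * u' * (u * v) = 1" using a by (metis mult.assoc mult_1)
  ultimately show "\<exists>w. u * v * w = 1 \<and> w * (u * v) = 1" by blast
qed

lemma inv_one: "involution s \<Longrightarrow> s 1 = (1::'a::ring_1)"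
  unfolding involution_def by (metis mult_1 mult.right_neutral)

lemma inv_diff: "involution s \<Longrightarrow> s (a - b) = s a - (s b::'a::ring_1)"
  unfolding involution_def by (metis add_diff_cancel_right' diff_add_cancel)

lemma proj_compl: "involution s \<Longrightarrow> is_projection s e \<Longrightarrow> is_projection s (1 - (e::'a::ring_1))"
proof -
  assume s: "involution s" and p: "is_projection s e"
  have "s (1 - e) = 1 - e" using inv_one[OF s] inv_diff[OF s] p unfolding is_projection_def by simp
  moreover have "(1 - e) * (1 - e) = 1 - e" using p unfolding is_projection_def by (simp add: algebra_simps)
  ultimately show ?thesis unfolding is_projection_def by simp
qed

lemma l4: fixes e f u :: "'a::ring_1" assumes ff: "f*f = 1" and f: "f = e+e-1" shows "e + u - (1 - e) = f * (1 + f * u)"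
proof -
  have "f * (1 + f * u) = f + (f * f) * u" by (simp add: distrib_left mult.assoc)
  also have "\<dots> = e + u - (1 - e)" using ff f by simp
  finally show ?thesis by simp
qed
lemma l5: fixes a e :: "'a::ring_1" assumes ee: "e*e = e" and ea: "e * a = a * e"
  and ea2: "\<And>x. e * (a * x) = a * (e * x)" and ee2: "\<And>x. e * (e * x) = e * x"
  shows "(a-e) * ((a-e) * (a-e) - 1) = (a*a-a) - (e * (a*a-a) + e * (a*a-a)) + (a-e) * (a*a-a)"
 by (simp add: algebra_simps ea ea2 ee ee2)
lemma l6: fixes a e :: "'a::ring_1" assumes ee: "e*e = e" and ea: "e * a = a * e"
  and ea2: "\<And>x. e * (a * x) = a * (e * x)" and ee2: "\<And>x. e * (e * x) = e * x"
  shows "(a-e) * (a-e) - 1 - (a*a-a) = a + e - (a * e + a * e) - 1"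
 by (simp add: algebra_simps ea ea2 ee ee2)
lemma l7: fixes a e :: "'a::ring_1" assumes ee: "e*e = e" and ea: "e * a = a * e"
  and ea2: "\<And>x. e * (a * x) = a * (e * x)" and ee2: "\<And>x. e * (e * x) = e * x"
  shows "e * (a + e - (a * e + a * e) - 1) = - (a * e)"
 by (simp add: algebra_simps ea ea2 ee ee2)

theorem proposition2p6:
  fixes s :: "'a::ring_1 \<Rightarrow> 'a"
  assumes "involution s"
  shows "strongly_J_star_clean s \<longleftrightarrow>
           (quotient_by_jacobson_boolean TYPE('a) \<and> strongly_star_clean s)"
proof
  assume H: "strongly_J_star_clean s"
  have B: "quotient_by_jacobson_boolean TYPE('a)"
    unfolding quotient_by_jacobson_boolean_def
  proof
    fix a :: 'a
    obtain e u where a: "a = e + u" and p: "is_projection s e" and u: "u \<in> jacobson"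
      and c: "a * e = e * a" using H unfolding strongly_J_star_clean_def by blast
    have ee: "e * e = e" using p unfolding is_projection_def by auto
    have ue: "u * e = e * u" using c ee unfolding a by (simp add: algebra_simps)
    have "a * a - a = e * u + e * u + (u * u - u)"
      unfolding a using ee ue by (simp add: algebra_simps)
    also have "\<dots> \<in> jacobson"
      using u by (intro J_add J_diff J_mult)
    finally show "a * a - a \<in> jacobson" .
  qed
  have C: "strongly_star_clean s"
    unfolding strongly_star_clean_def
  proof
    fix a :: 'a
    obtain e u where a: "a = e + u" and p: "is_projection s e" and u: "u \<in> jacobson"
      and c: "a * e = e * a" using H unfolding strongly_J_star_clean_def by blast
    have ee: "e * e = e" using p unfolding is_projection_def by auto
    have ue: "u * e = e * u" using c ee unfolding a by (simp add: algebra_simps)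
    define f where "f = e + e - 1"
    have ff: "f * f = 1" unfolding f_def using ee by (simp add: algebra_simps)
    have fu: "f \<in> units_of_ring" using ff unfolding units_of_ring_def by blast
    have w: "a - (1 - e) = f * (1 + f * u)"
      unfolding a by (rule l4[OF ff f_def])
    have wu: "a - (1 - e) \<in> units_of_ring"
      unfolding w by (intro unit_mult fu J_unit J_mult u)
    have com: "(1 - e) * (a - (1 - e)) = (a - (1 - e)) * (1 - e)"
      using c ee by (simp add: algebra_simps)
    show "\<exists>e u. a = e + u \<and> is_projection s e \<and> u \<in> units_of_ring \<and> e * u = u * e"
      by (rule exI[of _ "1 - e"], rule exI[of _ "a - (1 - e)"])
         (use wu com proj_compl[OF assms p] in simp)
  qed
  show "quotient_by_jacobson_boolean TYPE('a) \<and> strongly_star_clean s" using B C by blast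
next
  assume H: "quotient_by_jacobson_boolean TYPE('a) \<and> strongly_star_clean s"
  show "strongly_J_star_clean s"
    unfolding strongly_J_star_clean_def
  proof
    fix a :: 'a
    have t: "a * a - a \<in> jacobson" using H unfolding quotient_by_jacobson_boolean_def by blast
    obtain e w where a: "a = e + w" and p: "is_projection s e" and wu: "w \<in> units_of_ring"
      and c: "e * w = w * e" using H unfolding strongly_star_clean_def by blast
    have ee: "e * e = e" using p unfolding is_projection_def by auto
    obtain v where v: "v * w = 1" using wu unfolding units_of_ring_def by blast
    have wa: "w = a - e" using a by simp
    have ea: "e * a = a * e" using c ee unfolding a by (simp add: algebra_simps)
    have ea2: "e * (a * x) = a * (e * x)" for x by (metis ea mult.assoc)
    have ee2: "e * (e * x) = e * x" for x by (metis ee mult.assoc)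
    define t where "t = a * a - a"
    have "w * (w * w - 1) = t - (e * t + e * t) + w * t"
      unfolding wa t_def by (rule l5[OF ee ea ea2 ee2])
    also have "\<dots> \<in> jacobson" using t unfolding t_def[symmetric]
      by (intro J_add J_diff J_mult)
    finally have j1: "w * (w * w - 1) \<in> jacobson" .
    have "w * w - 1 = v * (w * (w * w - 1))" by (metis v mult.assoc mult_1)
    then have j2: "w * w - 1 \<in> jacobson" using J_mult[OF j1, of v] by simp
    have k: "w * w - 1 - t = a + e - (a * e + a * e) - 1"
      unfolding wa t_def by (rule l6[OF ee ea ea2 ee2])
    have kJ: "a + e - (a * e + a * e) - 1 \<in> jacobson"
      unfolding k[symmetric] using J_diff[OF j2 t] unfolding t_def .
    have "e * (a + e - (a * e + a * e) - 1) = - (a * e)"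
      by (rule l7[OF ee ea ea2 ee2])
    then have aeJ: "a * e \<in> jacobson" using J_mult[OF kJ, of e] J_uminus by fastforce
    have "a + e - 1 = (a + e - (a * e + a * e) - 1) + (a * e + a * e)" by simp
    then have jJ: "a + e - 1 \<in> jacobson" using kJ aeJ by (metis J_add)
    show "\<exists>e u. a = e + u \<and> is_projection s e \<and> u \<in> jacobson \<and> a * e = e * a"
      by (rule exI[of _ "1 - e"], rule exI[of _ "a + e - 1"])
         (use jJ proj_compl[OF assms p] ea in \<open>simp add: algebra_simps\<close>)
  qed
qed

end
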